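(* Let $n\geq 2$, $i\geq 1$ and $2\leq m_1<\dots<m_i\leq n$. Then $A^{C_{m_1}\cdots C_{m_i}}_{[2,n],\emptyset}=A^{\mathrm{id}}_{I,J}$, where $J=\{m_1,\dots,m_i\}$ and $I=[2,n]\setminus J$.
   Context: Let $w_{ij}$, $1\leq i,j\leq n$, be formal variables subject only to $w_{ij}+w_{ji}=0$. Let $[2,n]=\{2,\dots,n\}$. For $\sigma\in S_n$ and a disjoint decomposition $I\sqcup J=[2,n]$, set $$A^\sigma_{I,J}:=\sum_{i\in I}\sum_{\ell=1}^{i-1}w_{\sigma(\ell)\sigma(i)}-\sum_{j\in J}\sum_{\ell=1}^{j-1}w_{\sigma(\ell)\sigma(j)}.$$ Permutations are composed right-to-left: $(\sigma\tau)(k)=\sigma(\tau(k))$. For $m\geq 2$, $C_m$ is the cycle $(1,m,m-1,\dots,2)$, i.e. $1\mapsto m\mapsto m-1\mapsto\dots\mapsto 2\mapsto 1$. *)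

theory Defs
  imports Main
begin

definition A_coef :: "(nat \<Rightarrow> nat \<Rightarrow> 'a::ab_group_add) \<Rightarrow> (nat \<Rightarrow> nat) \<Rightarrow> nat set \<Rightarrow> nat set \<Rightarrow> 'a" where
  "A_coef w \<sigma> I J =
     (\<Sum>i\<in>I. \<Sum>l\<in>{1..<i}. w (\<sigma> l) (\<sigma> i)) - (\<Sum>j\<in>J. \<Sum>l\<in>{1..<j}. w (\<sigma> l) (\<sigma> j))"

text \<open>The cycle C_m = (1, m, m-1, ..., 2): 1 to m, k to k-1 for 2 <= k <= m.\<close>
definition cyc :: "nat \<Rightarrow> nat \<Rightarrow> nat" where
  "cyc m k = (if k = 1 then m else if 2 \<le> k \<and> k \<le> m then k - 1 else k)"

definition cyc_prod :: "nat list \<Rightarrow> nat \<Rightarrow> nat" where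
  "cyc_prod ms = foldr (\<circ>) (map cyc ms) id"

end

theory Submission
  imports Defs
begin

lemma cyc_prod_Cons: "cyc_prod (m # ms) = cyc m \<circ> cyc_prod ms"
  by (simp add: cyc_prod_def)

lemma cyc_prod_Nil: "cyc_prod [] = id"
  by (simp add: cyc_prod_def)

lemma cyc_inj: "1 \<le> m \<Longrightarrow> inj (cyc m)"
  unfolding inj_def cyc_def by auto

lemma prod_props:
  "\<forall>m\<in>set ms. 2 \<le> m \<and> m \<le> n \<Longrightarrow>
   (\<forall>k\<in>{1..n}. cyc_prod ms k \<in> {1..n}) \<and> inj (cyc_prod ms)"
proof (induction ms)
  case Nil
  then show ?case by (simp add: cyc_prod_Nil)
next
  case (Cons m ms)
  then have IH: "(\<forall>k\<in>{1..n}. cyc_prod ms k \<in> {1..n}) \<and> inj (cyc_prod ms)"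
    and m: "2 \<le> m" "m \<le> n" by auto
  have "\<forall>k\<in>{1..n}. cyc m k \<in> {1..n}" using m by (auto simp: cyc_def)
  moreover have "inj (cyc m)" using m cyc_inj by simp
  ultimately show ?case using IH inj_compose[of "cyc m" "cyc_prod ms"]
    by (auto simp: cyc_prod_Cons comp_def)
qed

lemma order_prop:
  "sorted_wrt (<) ms \<Longrightarrow> \<forall>m\<in>set ms. 2 \<le> m \<and> m \<le> n \<Longrightarrow>
   l \<in> {1..n} \<Longrightarrow> i \<in> {1..n} \<Longrightarrow> cyc_prod ms l < cyc_prod ms i \<Longrightarrow>
   (l < i \<longleftrightarrow> cyc_prod ms i \<notin> set ms)"
proof (induction ms arbitrary: l i)
  case Nil
  then show ?case by (simp add: cyc_prod_Nil)
next
  case (Cons m ms)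
  let ?t = "cyc_prod ms"
  have srt: "sorted_wrt (<) ms" and gt: "\<forall>x\<in>set ms. m < x"
    using Cons.prems(1) by auto
  have rng: "\<forall>m\<in>set ms. 2 \<le> m \<and> m \<le> n" and m: "2 \<le> m" "m \<le> n"
    using Cons.prems(2) by auto
  have maps: "\<forall>k\<in>{1..n}. ?t k \<in> {1..n}" and inj: "inj ?t"
    using prod_props[OF rng] by auto
  define a where "a = ?t l"
  define b where "b = ?t i"
  have a: "a \<in> {1..n}" and b: "b \<in> {1..n}" using maps Cons.prems(3,4) a_def b_def by auto
  have lt: "cyc m a < cyc m b" using Cons.prems(5) by (simp add: cyc_prod_Cons a_def b_def)
  have IH1: "a < b \<Longrightarrow> (l < i \<longleftrightarrow> b \<notin> set ms)"
    using Cons.IH[OF srt rng Cons.prems(3,4)] a_def b_def by simp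
  have IH2: "b < a \<Longrightarrow> (i < l \<longleftrightarrow> a \<notin> set ms)"
    using Cons.IH[OF srt rng Cons.prems(4,3)] a_def b_def by simp
  have goal: "(l < i \<longleftrightarrow> cyc m b \<notin> set (m # ms))"
  proof (cases "a = 1")
    case True
    then have "m < cyc m b" using lt by (simp add: cyc_def)
    then have bm: "b > m" "cyc m b = b" by (auto simp: cyc_def split: if_splits)
    have "a < b" using True bm m by simp
    then show ?thesis using IH1 bm by auto
  next
    case a1: False
    show ?thesis
    proof (cases "b = 1")
      case True
      then have am: "2 \<le> a" "a \<le> m" using lt a a1 by (auto simp: cyc_def split: if_splits)
      have "a \<notin> set ms" using am gt by auto
      then have "i < l" using IH2 True am by simp
      then show ?thesis using True m by (simp add: cyc_def)
    next
      case b1: False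
      have "a < b" using lt a b a1 b1 by (auto simp: cyc_def split: if_splits)
      moreover have "cyc m b \<notin> set (m # ms) \<longleftrightarrow> b \<notin> set ms"
      proof (cases "b \<le> m")
        case True
        then have "cyc m b < m" using b b1 m by (auto simp: cyc_def)
        moreover have "b \<notin> set ms" using True gt by auto
        ultimately show ?thesis using gt by auto
      next
        case False
        then have "cyc m b = b" using m by (auto simp: cyc_def)
        then show ?thesis using False by auto
      qed
      ultimately show ?thesis using IH1 by simp
    qed
  qed
  then show ?case by (simp add: cyc_prod_Cons b_def)
qed

theorem lemma3p8:
  fixes w :: "nat \<Rightarrow> nat \<Rightarrow> 'a::ab_group_add" and n :: nat and ms :: "nat list"
  assumes antisym: "\<And>i j. w i j + w j i = 0"
    and n: "n \<ge> 2"
    and ne: "ms \<noteq> []"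
    and sorted: "sorted_wrt (<) ms"
    and range: "\<forall>m\<in>set ms. 2 \<le> m \<and> m \<le> n"
  shows "A_coef w (cyc_prod ms) {2..n} {} = A_coef w id ({2..n} - set ms) (set ms)"
proof -
  let ?s = "cyc_prod ms"
  let ?J = "set ms"
  define P where "P = Sigma {2..n} (\<lambda>i. {1..<i})"
  define g where "g = (\<lambda>p. if fst p \<in> ?J then - w (snd p) (fst p) else w (snd p) (fst p))"
  define h where "h = (\<lambda>p. (max (?s (fst p)) (?s (snd p)), min (?s (fst p)) (?s (snd p))))"
  have maps: "\<forall>k\<in>{1..n}. ?s k \<in> {1..n}" and inj: "inj ?s"
    using prod_props[OF range] by auto
  have wneg: "\<And>a b. w a b = - w b a" using antisym by (metis add_eq_0_iff)
  have finP: "finite P" unfolding P_def by auto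
  have PI: "\<And>i l. (i, l) \<in> P \<longleftrightarrow> 2 \<le> i \<and> i \<le> n \<and> 1 \<le> l \<and> l < i"
    unfolding P_def by auto
  have step1: "\<And>p. p \<in> P \<Longrightarrow> w (?s (snd p)) (?s (fst p)) = g (h p)"
  proof -
    fix p assume p: "p \<in> P"
    obtain i l where pil: "p = (i, l)" by (cases p)
    have il: "l \<in> {1..n}" "i \<in> {1..n}" "l < i" using p pil PI by auto
    have ne: "?s l \<noteq> ?s i" using inj il(3) by (metis inj_eq less_irrefl)
    show "w (?s (snd p)) (?s (fst p)) = g (h p)"
    proof (cases "?s l < ?s i")
      case True
      then have "?s i \<notin> ?J" using order_prop[OF sorted range il(1,2)] il(3) by simp
      then show ?thesis using True by (simp add: pil g_def h_def)
    next
      case False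
      then have lt: "?s i < ?s l" using ne by simp
      then have "?s l \<in> ?J" using order_prop[OF sorted range il(2,1)] il(3) by simp
      then show ?thesis using lt by (simp add: pil g_def h_def wneg[of "?s l"])
    qed
  qed
  have injh: "inj_on h P"
  proof (rule inj_onI)
    fix p q assume p: "p \<in> P" and q: "q \<in> P" and e: "h p = h q"
    obtain i l where pil: "p = (i, l)" by (cases p)
    obtain i' l' where qil: "q = (i', l')" by (cases q)
    have lt: "l < i" "l' < i'" using p q pil qil PI by auto
    have ne: "?s l \<noteq> ?s i" "?s l' \<noteq> ?s i'" using inj lt by (metis inj_eq less_irrefl)+
    have "(?s i = ?s i' \<and> ?s l = ?s l') \<or> (?s i = ?s l' \<and> ?s l = ?s i')"
      using e ne unfolding h_def pil qil by (auto simp: max_def min_def split: if_splits)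
    then have "(i = i' \<and> l = l') \<or> (i = l' \<and> l = i')" using inj by (auto dest: injD)
    then show "p = q" using lt pil qil by auto
  qed
  have hsub: "h ` P \<subseteq> P"
  proof
    fix q assume "q \<in> h ` P"
    then obtain p where p: "p \<in> P" and q: "q = h p" by auto
    obtain i l where pil: "p = (i, l)" by (cases p)
    have il: "l \<in> {1..n}" "i \<in> {1..n}" "l < i" using p pil PI by auto
    have ne: "?s l \<noteq> ?s i" using inj il(3) by (metis inj_eq less_irrefl)
    have "?s l \<in> {1..n}" "?s i \<in> {1..n}" using maps il by auto
    then show "q \<in> P" using ne unfolding q pil h_def PI by (auto simp: max_def min_def)
  qed
  have hP: "h ` P = P"
    using card_subset_eq[OF finP hsub] card_image[OF injh] by simp
  have L: "A_coef w ?s {2..n} {} = (\<Sum>p\<in>P. w (?s (snd p)) (?s (fst p)))"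
    unfolding A_coef_def P_def by (simp add: sum.Sigma case_prod_beta')
  also have "\<dots> = (\<Sum>p\<in>P. g (h p))" using step1 by (rule sum.cong[OF refl])
  also have "\<dots> = (\<Sum>q\<in>h ` P. g q)" by (rule sum.reindex[OF injh, of g, unfolded comp_def, symmetric])
  also have "\<dots> = (\<Sum>q\<in>P. g q)" using hP by simp
  also have "\<dots> = (\<Sum>b\<in>{2..n}. \<Sum>a\<in>{1..<b}. if b \<in> ?J then - w a b else w a b)"
    unfolding P_def g_def by (simp add: sum.Sigma case_prod_beta')
  also have "\<dots> = (\<Sum>b\<in>{2..n}. if b \<in> ?J then - (\<Sum>a\<in>{1..<b}. w a b) else (\<Sum>a\<in>{1..<b}. w a b))"
    by (rule sum.cong) (auto simp: sum_negf)
  also have "\<dots> = (\<Sum>b\<in>{2..n} \<inter> {b. b \<in> ?J}. - (\<Sum>a\<in>{1..<b}. w a b)) + (\<Sum>b\<in>{2..n} \<inter> - {b. b \<in> ?J}. (\<Sum>a\<in>{1..<b}. w a b))"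
    by (rule sum.If_cases) simp
  also have "{2..n} \<inter> {b. b \<in> ?J} = ?J" using range by auto
  also have "{2..n} \<inter> - {b. b \<in> ?J} = {2..n} - ?J" by auto
  finally show ?thesis unfolding A_coef_def by (simp add: sum_negf)
qed

end
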